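(* Let $1<p<\infty$, $\frac1p+\frac1q=1$, and let $\mathcal{U}$ be a nonprincipal ultrafilter on $\mathbb{N}$. Let $R_p$ and $R_q$ denote the projections on $(L^{p})^{\mathcal{U}}$ and $(L^{q})^{\mathcal{U}}$ given by $R_s[(f_n)_{n,\mathcal{U}}]=\lim_{r\to\infty}(f_nI(|f_n|>r))_{n,\mathcal{U}}$ ($s=p,q$). Then $R_p^{*}=R_q$ under the duality $(L^{p})^{\mathcal{U}*}=(L^{q})^{\mathcal{U}}$; that is, for all $(f_n)_{n,\mathcal{U}}\in(L^{p})^{\mathcal{U}}$ and $(g_n)_{n,\mathcal{U}}\in(L^{q})^{\mathcal{U}}$, $\langle R_p[(f_n)_{n,\mathcal{U}}],(g_n)_{n,\mathcal{U}}\rangle=\langle (f_n)_{n,\mathcal{U}},R_q[(g_n)_{n,\mathcal{U}}]\rangle$.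
   Context: $L^{p}=L^{p}([0,1],\mu)$, $\mu$ Lebesgue measure, real scalars; $(L^{p})^{\mathcal{U}}$ is the ultrapower of $L^p$ and $(f_n)_{n,\mathcal{U}}$ the class of a bounded sequence. The limit defining $R_s$ exists in norm and $R_s$ is a bounded linear projection. The dual pairing is $\langle (f_n)_{n,\mathcal{U}},(g_n)_{n,\mathcal{U}}\rangle=\lim_{n,\mathcal{U}}\int f_ng_n\,d\mu$, which identifies $(L^{q})^{\mathcal{U}}$ with the dual of $(L^{p})^{\mathcal{U}}$. $I(|f|>r)$ is the indicator of $\{|f|>r\}$. *)

theory Defs
  imports "HOL-Analysis.Analysis"
begin

definition is_ultrafilter :: "'a filter \<Rightarrow> bool" where
  "is_ultrafilter U \<longleftrightarrow> U \<noteq> bot \<and> (\<forall>P. eventually P U \<or> eventually (\<lambda>x. \<not> P x) U)"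

text \<open>Nonprincipal: every cofinite set belongs to U.\<close>
definition nonprincipal :: "'a filter \<Rightarrow> bool" where
  "nonprincipal U \<longleftrightarrow> U \<le> cofinite"

abbreviation mu01 :: "real measure" where
  "mu01 \<equiv> lebesgue_on {0..1}"

definition in_Lp :: "real \<Rightarrow> (real \<Rightarrow> real) \<Rightarrow> bool" where
  "in_Lp p f \<longleftrightarrow> f \<in> borel_measurable mu01 \<and> integrable mu01 (\<lambda>x. \<bar>f x\<bar> powr p)"

definition Lp_norm :: "real \<Rightarrow> (real \<Rightarrow> real) \<Rightarrow> real" where
  "Lp_norm p f = (\<integral>x. \<bar>f x\<bar> powr p \<partial>mu01) powr (1/p)"

text \<open>Bounded sequences in L^p: representatives of elements of the ultrapower.\<close>
definition bounded_Lp_seq :: "real \<Rightarrow> (nat \<Rightarrow> real \<Rightarrow> real) \<Rightarrow> bool" where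
  "bounded_Lp_seq p f \<longleftrightarrow> (\<forall>n. in_Lp p (f n)) \<and> (\<exists>C. \<forall>n. Lp_norm p (f n) \<le> C)"

definition ultra_norm :: "nat filter \<Rightarrow> real \<Rightarrow> (nat \<Rightarrow> real \<Rightarrow> real) \<Rightarrow> real" where
  "ultra_norm U p h = Lim U (\<lambda>n. Lp_norm p (h n))"

definition trunc_above :: "real \<Rightarrow> (real \<Rightarrow> real) \<Rightarrow> real \<Rightarrow> real" where
  "trunc_above r f x = (if \<bar>f x\<bar> > r then f x else 0)"

text \<open>F represents R_s[(f_n)]: the class of F is the norm limit as r \<rightarrow> \<infinity> of
  the classes of (f_n I(|f_n|>r))_n in the ultrapower.\<close>
definition is_R :: "nat filter \<Rightarrow> real \<Rightarrow> (nat \<Rightarrow> real \<Rightarrow> real) \<Rightarrow> (nat \<Rightarrow> real \<Rightarrow> real) \<Rightarrow> bool" where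
  "is_R U s f F \<longleftrightarrow> bounded_Lp_seq s F \<and>
     ((\<lambda>r. ultra_norm U s (\<lambda>n x. trunc_above r (f n) x - F n x)) \<longlongrightarrow> 0) at_top"

definition ultra_pair :: "nat filter \<Rightarrow> (nat \<Rightarrow> real \<Rightarrow> real) \<Rightarrow> (nat \<Rightarrow> real \<Rightarrow> real) \<Rightarrow> real" where
  "ultra_pair U f g = Lim U (\<lambda>n. \<integral>x. f n x * g n x \<partial>mu01)"

end

theory Submission
  imports Defs
begin


lemma q_gt1:
  fixes p q :: real assumes "1 < p" "1/p + 1/q = 1" shows "q > 1"
proof -
  have a: "1/q = 1 - 1/p" using assms by simp
  have "0 < 1/p" "1/p < 1" using assms by auto
  then have b: "0 < 1/q" "1/q < 1" using a by auto
  then have "q > 0" by (simp add: zero_less_divide_1_iff)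
  then show ?thesis using b by (simp add: divide_less_eq)
qed

lemma young:
  fixes a b p q :: real
  assumes "a \<ge> 0" "b \<ge> 0" "1 < p" "1/p + 1/q = 1"
  shows "a * b \<le> a powr p / p + b powr q / q"
proof (cases "a = 0 \<or> b = 0")
  case True
  have qq: "q > 1" using assms(3,4) by (rule q_gt1)
  have ab: "a * b = 0" using True by auto
  have nn: "0 \<le> a powr p / p + b powr q / q"
    using assms(3) qq by (intro add_nonneg_nonneg divide_nonneg_pos) auto
  show ?thesis unfolding ab by (rule nn)
next
  case False
  then have a: "a > 0" and b: "b > 0" using assms by auto
  have q: "q > 1" using assms q_gt1 by blast
  have "exp ((1 - 1/q) *\<^sub>R (p * ln a) + (1/q) *\<^sub>R (q * ln b)) \<le> (1 - 1/q) * exp (p * ln a) + (1/q) * exp (q * ln b)"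
    using convex_onD[OF exp_convex, of "1/q" "p * ln a" "q * ln b"] q by auto
  moreover have "1 - 1/q = 1/p" using assms by simp
  moreover have "(1/p) * (p * ln a) + (1/q) * (q * ln b) = ln a + ln b" using assms q by simp
  ultimately have "exp (ln a + ln b) \<le> (1/p) * exp (p * ln a) + (1/q) * exp (q * ln b)" by simp
  then show ?thesis using a b by (simp add: exp_add powr_def mult.commute)
qed

lemma Lp_norm_nonneg: "Lp_norm p f \<ge> 0"
  by (simp add: Lp_norm_def)

lemma holder_pos:
  fixes u v :: "real \<Rightarrow> real" and p q A B :: real
  assumes "1 < p" "1/p + 1/q = 1" "A > 0" "B > 0"
  shows "\<bar>u x * v x\<bar> \<le> A powr (1/p) * B powr (1/q) *
     (\<bar>u x\<bar> powr p / (p * A) + \<bar>v x\<bar> powr q / (q * B))"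
proof -
  have q: "q > 1" using assms q_gt1 by blast
  define a where "a = A powr (1/p)"
  define b where "b = B powr (1/q)"
  have a: "a > 0" "a powr p = A" using assms by (auto simp: a_def powr_powr)
  have b: "b > 0" "b powr q = B" using assms q by (auto simp: b_def powr_powr)
  have "(\<bar>u x\<bar> / a) * (\<bar>v x\<bar> / b) \<le> (\<bar>u x\<bar> / a) powr p / p + (\<bar>v x\<bar> / b) powr q / q"
    by (rule young) (use assms a b in auto)
  also have "\<dots> = \<bar>u x\<bar> powr p / (p * A) + \<bar>v x\<bar> powr q / (q * B)"
    using a b by (simp add: powr_divide mult.commute)
  finally have "(\<bar>u x\<bar> / a) * (\<bar>v x\<bar> / b) \<le> \<bar>u x\<bar> powr p / (p * A) + \<bar>v x\<bar> powr q / (q * B)" .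
  then have "a * b * ((\<bar>u x\<bar> / a) * (\<bar>v x\<bar> / b)) \<le> a * b * (\<bar>u x\<bar> powr p / (p * A) + \<bar>v x\<bar> powr q / (q * B))"
    using a b by (intro mult_left_mono) auto
  then show ?thesis using a b by (simp add: a_def[symmetric] b_def[symmetric] abs_mult)
qed

lemma holder:
  fixes u v :: "real \<Rightarrow> real" and p q :: real
  assumes "1 < p" "1/p + 1/q = 1" "in_Lp p u" "in_Lp q v"
  shows "integrable mu01 (\<lambda>x. u x * v x)"
    and "\<bar>\<integral>x. u x * v x \<partial>mu01\<bar> \<le> Lp_norm p u * Lp_norm q v"
proof -
  have q: "q > 1" using assms q_gt1 by blast
  have mu[measurable]: "u \<in> borel_measurable mu01" "v \<in> borel_measurable mu01"
    and iu: "integrable mu01 (\<lambda>x. \<bar>u x\<bar> powr p)" and iv: "integrable mu01 (\<lambda>x. \<bar>v x\<bar> powr q)"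
    using assms by (auto simp: in_Lp_def)
  show int: "integrable mu01 (\<lambda>x. u x * v x)"
  proof (rule Bochner_Integration.integrable_bound)
    show "integrable mu01 (\<lambda>x. \<bar>u x\<bar> powr p / p + \<bar>v x\<bar> powr q / q)"
      using iu iv by auto
    show "AE x in mu01. norm (u x * v x) \<le> norm (\<bar>u x\<bar> powr p / p + \<bar>v x\<bar> powr q / q)"
      using young[of "\<bar>u x\<bar>" "\<bar>v x\<bar>" p q for x] assms q
      by (auto simp: abs_mult)
  qed measurable
  define A where "A = (\<integral>x. \<bar>u x\<bar> powr p \<partial>mu01)"
  define B where "B = (\<integral>x. \<bar>v x\<bar> powr q \<partial>mu01)"
  have A0: "A \<ge> 0" "B \<ge> 0" unfolding A_def B_def by auto
  have nA: "Lp_norm p u = A powr (1/p)" and nB: "Lp_norm q v = B powr (1/q)"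
    by (auto simp: Lp_norm_def A_def B_def)
  show "\<bar>\<integral>x. u x * v x \<partial>mu01\<bar> \<le> Lp_norm p u * Lp_norm q v"
  proof (cases "A = 0 \<or> B = 0")
    case True
    then have "(AE x in mu01. \<bar>u x\<bar> powr p = 0) \<or> (AE x in mu01. \<bar>v x\<bar> powr q = 0)"
      using integral_nonneg_eq_0_iff_AE[OF iu] integral_nonneg_eq_0_iff_AE[OF iv]
      by (auto simp: A_def B_def)
    then have "AE x in mu01. u x * v x = 0"
      by (elim disjE; elim AE_mp) auto
    then have "(\<integral>x. u x * v x \<partial>mu01) = (\<integral>x. 0 \<partial>mu01)"
      by (intro integral_cong_AE) auto
    then show ?thesis by (simp add: Lp_norm_nonneg)
  next
    case False
    then have pos: "A > 0" "B > 0" using A0 by auto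
    have "\<bar>\<integral>x. u x * v x \<partial>mu01\<bar> \<le> (\<integral>x. A powr (1/p) * B powr (1/q) *
       (\<bar>u x\<bar> powr p / (p * A) + \<bar>v x\<bar> powr q / (q * B)) \<partial>mu01)"
      by (rule integral_abs_bound_integral[OF int])
        (use iu iv holder_pos[OF assms(1,2) pos] in auto)
    also have "\<dots> = A powr (1/p) * B powr (1/q) * (A / (p * A) + B / (q * B))"
      using iu iv by (simp add: A_def B_def)
    also have "\<dots> = A powr (1/p) * B powr (1/q)"
      using pos assms by simp
    finally show ?thesis using nA nB by simp
  qed
qed

lemma diff_powr_bound:
  fixes a b p :: real assumes "p > 0"
  shows "\<bar>a - b\<bar> powr p \<le> 2 powr p * (\<bar>a\<bar> powr p + \<bar>b\<bar> powr p)"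
proof -
  have "\<bar>a - b\<bar> powr p \<le> (2 * max \<bar>a\<bar> \<bar>b\<bar>) powr p"
    by (rule powr_mono2) (use assms in auto)
  also have "\<dots> = 2 powr p * max \<bar>a\<bar> \<bar>b\<bar> powr p" by (simp add: powr_mult)
  also have "\<dots> \<le> 2 powr p * (\<bar>a\<bar> powr p + \<bar>b\<bar> powr p)"
    by (intro mult_left_mono) (auto simp: max_def)
  finally show ?thesis .
qed

lemma in_Lp_diff:
  assumes "p > 0" "in_Lp p u" "in_Lp p v"
  shows "in_Lp p (\<lambda>x. u x - v x)"
    and "(\<integral>x. \<bar>u x - v x\<bar> powr p \<partial>mu01) \<le> 2 powr p * ((\<integral>x. \<bar>u x\<bar> powr p \<partial>mu01) + (\<integral>x. \<bar>v x\<bar> powr p \<partial>mu01))"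
proof -
  have [measurable]: "u \<in> borel_measurable mu01" "v \<in> borel_measurable mu01"
    and iu: "integrable mu01 (\<lambda>x. \<bar>u x\<bar> powr p)" and iv: "integrable mu01 (\<lambda>x. \<bar>v x\<bar> powr p)"
    using assms by (auto simp: in_Lp_def)
  have ib: "integrable mu01 (\<lambda>x. 2 powr p * (\<bar>u x\<bar> powr p + \<bar>v x\<bar> powr p))"
    using iu iv by auto
  have id: "integrable mu01 (\<lambda>x. \<bar>u x - v x\<bar> powr p)"
  proof (rule Bochner_Integration.integrable_bound[OF ib])
    show "AE x in mu01. norm (\<bar>u x - v x\<bar> powr p) \<le> norm (2 powr p * (\<bar>u x\<bar> powr p + \<bar>v x\<bar> powr p))"
      using diff_powr_bound[OF assms(1)] by auto
  qed measurable
  then show "in_Lp p (\<lambda>x. u x - v x)" by (auto simp: in_Lp_def)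
  have "(\<integral>x. \<bar>u x - v x\<bar> powr p \<partial>mu01) \<le> (\<integral>x. 2 powr p * (\<bar>u x\<bar> powr p + \<bar>v x\<bar> powr p) \<partial>mu01)"
    by (rule Bochner_Integration.integral_mono[OF id ib]) (use diff_powr_bound[OF assms(1)] in auto)
  also have "\<dots> = 2 powr p * ((\<integral>x. \<bar>u x\<bar> powr p \<partial>mu01) + (\<integral>x. \<bar>v x\<bar> powr p \<partial>mu01))"
    using iu iv by simp
  finally show "(\<integral>x. \<bar>u x - v x\<bar> powr p \<partial>mu01) \<le> 2 powr p * ((\<integral>x. \<bar>u x\<bar> powr p \<partial>mu01) + (\<integral>x. \<bar>v x\<bar> powr p \<partial>mu01))" .
qed

lemma int_le_of_norm_le:
  assumes "p > 0" "Lp_norm p u \<le> C"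
  shows "(\<integral>x. \<bar>u x\<bar> powr p \<partial>mu01) \<le> C powr p"
proof -
  have "(\<integral>x. \<bar>u x\<bar> powr p \<partial>mu01) = Lp_norm p u powr p"
    using assms by (simp add: Lp_norm_def powr_powr)
  also have "\<dots> \<le> C powr p" by (rule powr_mono2) (use assms Lp_norm_nonneg in auto)
  finally show ?thesis .
qed

lemma norm_le_of_int_le:
  assumes "p > 0" "(\<integral>x. \<bar>u x\<bar> powr p \<partial>mu01) \<le> D"
  shows "Lp_norm p u \<le> D powr (1/p)"
  unfolding Lp_norm_def by (rule powr_mono2) (use assms in auto)

lemma diff_norm_bound:
  assumes "p > 0" "in_Lp p u" "in_Lp p v" "Lp_norm p u \<le> C1" "Lp_norm p v \<le> C2"
  shows "Lp_norm p (\<lambda>x. u x - v x) \<le> (2 powr p * (C1 powr p + C2 powr p)) powr (1/p)"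
proof (rule norm_le_of_int_le[OF assms(1)])
  show "(\<integral>x. \<bar>u x - v x\<bar> powr p \<partial>mu01) \<le> 2 powr p * (C1 powr p + C2 powr p)"
    by (rule order_trans[OF in_Lp_diff(2)[OF assms(1-3)]], intro mult_left_mono add_mono
        int_le_of_norm_le[OF assms(1) assms(4)] int_le_of_norm_le[OF assms(1) assms(5)]) auto
qed

lemma trunc_abs_le: "\<bar>trunc_above r u x\<bar> \<le> \<bar>u x\<bar>"
  by (simp add: trunc_above_def)

lemma in_Lp_trunc:
  assumes "p > 0" "in_Lp p u"
  shows "in_Lp p (trunc_above r u)" and "Lp_norm p (trunc_above r u) \<le> Lp_norm p u"
proof -
  have [measurable]: "u \<in> borel_measurable mu01" and iu: "integrable mu01 (\<lambda>x. \<bar>u x\<bar> powr p)"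
    using assms by (auto simp: in_Lp_def)
  have m[measurable]: "trunc_above r u \<in> borel_measurable mu01"
    unfolding trunc_above_def by measurable
  have le: "\<bar>trunc_above r u x\<bar> powr p \<le> \<bar>u x\<bar> powr p" for x
    by (rule powr_mono2) (use assms trunc_abs_le in auto)
  have it: "integrable mu01 (\<lambda>x. \<bar>trunc_above r u x\<bar> powr p)"
    by (rule Bochner_Integration.integrable_bound[OF iu]) (use le in auto)
  then show "in_Lp p (trunc_above r u)" by (auto simp: in_Lp_def)
  show "Lp_norm p (trunc_above r u) \<le> Lp_norm p u"
    unfolding Lp_norm_def
    by (rule powr_mono2) (use assms Bochner_Integration.integral_mono[OF it iu] le in auto)
qed

lemma ulim:
  fixes h :: "nat \<Rightarrow> real"
  assumes U: "is_ultrafilter U" and B: "\<And>n. \<bar>h n\<bar> \<le> B"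
  shows "(h \<longlongrightarrow> Lim U h) U"
proof -
  have Ub: "U \<noteq> bot" using U by (simp add: is_ultrafilter_def)
  have "filtermap h U \<noteq> bot" using Ub by (simp add: filtermap_bot_iff)
  moreover have "eventually (\<lambda>x. x \<in> cball 0 B) (filtermap h U)"
    using B by (auto simp: eventually_filtermap)
  ultimately obtain L where L: "inf (nhds L) (filtermap h U) \<noteq> bot"
    using compact_filter[THEN iffD1, OF compact_cball] by blast
  have "(h \<longlongrightarrow> L) U"
  proof (rule topological_tendstoI)
    fix S :: "real set" assume S: "open S" "L \<in> S"
    show "eventually (\<lambda>n. h n \<in> S) U"
    proof (rule ccontr)
      assume "\<not> eventually (\<lambda>n. h n \<in> S) U"
      then have "eventually (\<lambda>n. h n \<notin> S) U" using U by (auto simp: is_ultrafilter_def)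
      then have "eventually (\<lambda>x. x \<notin> S) (filtermap h U)" by (simp add: eventually_filtermap)
      moreover have "eventually (\<lambda>x. x \<in> S) (nhds L)" using S by (rule eventually_nhds_in_open)
      ultimately have "eventually (\<lambda>x. False) (inf (nhds L) (filtermap h U))"
        unfolding eventually_inf by blast
      then show False using L by (simp add: eventually_False)
    qed
  qed
  then show ?thesis using tendsto_Lim Ub by metis
qed

lemma trunc_tail:
  fixes p r :: real assumes "p \<ge> 1" "r > 0"
  shows "\<bar>trunc_above r u x\<bar> \<le> \<bar>u x\<bar> powr p * r powr (1 - p)"
proof (cases "\<bar>u x\<bar> > r")
  case True
  have "\<bar>u x\<bar> powr p * \<bar>u x\<bar> powr (1 - p) = \<bar>u x\<bar> powr (p + (1 - p))" by (simp only: powr_add)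
  also have "\<dots> = \<bar>u x\<bar>" using True assms by simp
  finally have "\<bar>u x\<bar> = \<bar>u x\<bar> powr p * \<bar>u x\<bar> powr (1 - p)" by simp
  also have "\<dots> \<le> \<bar>u x\<bar> powr p * r powr (1 - p)"
    by (intro mult_left_mono powr_mono2') (use assms True in auto)
  finally show ?thesis using True by (simp add: trunc_above_def)
qed (simp add: trunc_above_def)

lemma trunc_low:
  fixes s :: real assumes "s \<ge> 0"
  shows "\<bar>u x - trunc_above s u x\<bar> \<le> s"
  using assms by (simp add: trunc_above_def)

lemma key:
  assumes p: "1 < p" and pq: "1/p + 1/q = 1" and U: "is_ultrafilter U"
    and bf: "bounded_Lp_seq p f" and bg: "bounded_Lp_seq q g"
    and RF: "is_R U p f F" and RG: "is_R U q g G"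
  shows "((\<lambda>n. \<integral>x. F n x * (g n x - G n x) \<partial>mu01) \<longlongrightarrow> 0) U"
proof -
  have q: "q > 1" using p pq
    by (rule q_gt1)
  have p0: "p > 0" and q0: "q > 0" using p q by auto
  have Ub: "U \<noteq> bot" using U by (simp add: is_ultrafilter_def)
  obtain Cf where f1: "\<And>n. in_Lp p (f n)" and Cf: "\<And>n. Lp_norm p (f n) \<le> Cf"
    using bf by (auto simp: bounded_Lp_seq_def)
  obtain Cg where g1: "\<And>n. in_Lp q (g n)" and Cg: "\<And>n. Lp_norm q (g n) \<le> Cg"
    using bg by (auto simp: bounded_Lp_seq_def)
  obtain CF where F1: "\<And>n. in_Lp p (F n)" and CF: "\<And>n. Lp_norm p (F n) \<le> CF"
    using RF by (auto simp: bounded_Lp_seq_def is_R_def)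
  obtain CG where G1: "\<And>n. in_Lp q (G n)" and CG: "\<And>n. Lp_norm q (G n) \<le> CG"
    using RG by (auto simp: bounded_Lp_seq_def is_R_def)
  have Cf0: "Cf \<ge> 0" using Cf[of 0] Lp_norm_nonneg[of p "f 0"] by linarith
  have Cg0: "Cg \<ge> 0" using Cg[of 0] Lp_norm_nonneg[of q "g 0"] by linarith
  have CG0: "CG \<ge> 0" using CG[of 0] Lp_norm_nonneg[of q "G 0"] by linarith
  have CF0: "CF \<ge> 0" using CF[of 0] Lp_norm_nonneg[of p "F 0"] by linarith
  define e where "e r n = Lp_norm p (\<lambda>x. trunc_above r (f n) x - F n x)" for r n
  define d where "d s n = Lp_norm q (\<lambda>x. trunc_above s (g n) x - G n x)" for s n
  define \<epsilon> where "\<epsilon> r = Lim U (e r)" for r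
  define \<delta> where "\<delta> s = Lim U (d s)" for s
  have \<epsilon>0: "(\<epsilon> \<longlongrightarrow> 0) at_top"
    using RF unfolding is_R_def ultra_norm_def \<epsilon>_def e_def by simp
  have \<delta>0: "(\<delta> \<longlongrightarrow> 0) at_top"
    using RG unfolding is_R_def ultra_norm_def \<delta>_def d_def by simp
  have et: "(e r \<longlongrightarrow> \<epsilon> r) U" for r
    unfolding \<epsilon>_def
  proof (rule ulim[OF U])
    fix n
    have "e r n \<le> (2 powr p * (Cf powr p + CF powr p)) powr (1/p)"
      unfolding e_def
      by (rule diff_norm_bound[OF p0 in_Lp_trunc(1)[OF p0 f1] F1])
        (use in_Lp_trunc(2)[OF p0 f1, of r n] Cf[of n] CF[of n] in auto)
    then show "\<bar>e r n\<bar> \<le> (2 powr p * (Cf powr p + CF powr p)) powr (1/p)"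
      using Lp_norm_nonneg e_def by simp
  qed
  have dt: "(d s \<longlongrightarrow> \<delta> s) U" for s
    unfolding \<delta>_def
  proof (rule ulim[OF U])
    fix n
    have "d s n \<le> (2 powr q * (Cg powr q + CG powr q)) powr (1/q)"
      unfolding d_def
      by (rule diff_norm_bound[OF q0 in_Lp_trunc(1)[OF q0 g1] G1])
        (use in_Lp_trunc(2)[OF q0 g1, of s n] Cg[of n] CG[of n] in auto)
    then show "\<bar>d s n\<bar> \<le> (2 powr q * (Cg powr q + CG powr q)) powr (1/q)"
      using Lp_norm_nonneg d_def by simp
  qed
  define x where "x n = (\<integral>y. F n y * (g n y - G n y) \<partial>mu01)" for n
  define X where "X = Lim U x"
  have xt: "(x \<longlongrightarrow> X) U"
    unfolding X_def
  proof (rule ulim[OF U])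
    fix n
    have "\<bar>x n\<bar> \<le> Lp_norm p (F n) * Lp_norm q (\<lambda>y. g n y - G n y)"
      unfolding x_def by (rule holder(2)[OF p pq F1 in_Lp_diff(1)[OF q0 g1 G1]])
    also have "\<dots> \<le> CF * (2 powr q * (Cg powr q + CG powr q)) powr (1/q)"
      by (intro mult_mono CF diff_norm_bound[OF q0 g1 G1 Cg CG]) (auto simp: Lp_norm_nonneg CF0)
    finally show "\<bar>x n\<bar> \<le> CF * (2 powr q * (Cg powr q + CG powr q)) powr (1/q)" .
  qed
  have bound: "\<bar>x n\<bar> \<le> (Cg + CG) * e r n + s * Cf powr p * r powr (1 - p) + Cf * d s n"
    if r: "r > 0" and s: "s > 0" for r s n
  proof -
    define A where "A = trunc_above r (f n)"
    define B where "B = trunc_above s (g n)"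
    have A1: "in_Lp p A" unfolding A_def by (rule in_Lp_trunc(1)[OF p0 f1])
    have B1: "in_Lp q B" unfolding B_def by (rule in_Lp_trunc(1)[OF q0 g1])
    have AF: "in_Lp p (\<lambda>y. A y - F n y)" by (rule in_Lp_diff(1)[OF p0 A1 F1])
    have gB: "in_Lp q (\<lambda>y. g n y - B y)" by (rule in_Lp_diff(1)[OF q0 g1 B1])
    have BG: "in_Lp q (\<lambda>y. B y - G n y)" by (rule in_Lp_diff(1)[OF q0 B1 G1])
    note i1 = holder(1)[OF p pq AF g1] and i2 = holder(1)[OF p pq AF G1]
      and i3 = holder(1)[OF p pq A1 gB] and i4 = holder(1)[OF p pq A1 BG]
    have "x n = (\<integral>y. - ((A y - F n y) * g n y) + (A y - F n y) * G n y + A y * (g n y - B y) + A y * (B y - G n y) \<partial>mu01)"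
      unfolding x_def by (rule Bochner_Integration.integral_cong) (auto simp: algebra_simps)
    also have "\<dots> = - (\<integral>y. (A y - F n y) * g n y \<partial>mu01) + (\<integral>y. (A y - F n y) * G n y \<partial>mu01)
        + (\<integral>y. A y * (g n y - B y) \<partial>mu01) + (\<integral>y. A y * (B y - G n y) \<partial>mu01)"
      using i1 i2 i3 i4 by simp
    finally have xe: "x n = \<dots>" .
    have t1: "\<bar>\<integral>y. (A y - F n y) * g n y \<partial>mu01\<bar> \<le> e r n * Cg"
      using order_trans[OF holder(2)[OF p pq AF g1[of n]] mult_left_mono[OF Cg[of n] Lp_norm_nonneg]]
      unfolding e_def A_def .
    have t2: "\<bar>\<integral>y. (A y - F n y) * G n y \<partial>mu01\<bar> \<le> e r n * CG"
      using order_trans[OF holder(2)[OF p pq AF G1[of n]] mult_left_mono[OF CG[of n] Lp_norm_nonneg]]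
      unfolding e_def A_def .
    have t4: "\<bar>\<integral>y. A y * (B y - G n y) \<partial>mu01\<bar> \<le> Cf * d s n"
    proof -
      have "Lp_norm p A \<le> Cf" using in_Lp_trunc(2)[OF p0 f1, of r n] Cf[of n] by (simp add: A_def)
      then have "Lp_norm p A * Lp_norm q (\<lambda>y. B y - G n y) \<le> Cf * d s n"
        by (auto simp: d_def B_def intro!: mult_right_mono Lp_norm_nonneg)
      then show ?thesis using holder(2)[OF p pq A1 BG] by simp
    qed
    have t3: "\<bar>\<integral>y. A y * (g n y - B y) \<partial>mu01\<bar> \<le> s * Cf powr p * r powr (1 - p)"
    proof -
      have If: "integrable mu01 (\<lambda>y. \<bar>f n y\<bar> powr p)" using f1 by (simp add: in_Lp_def)
      have "\<bar>\<integral>y. A y * (g n y - B y) \<partial>mu01\<bar> \<le> (\<integral>y. s * r powr (1 - p) * \<bar>f n y\<bar> powr p \<partial>mu01)"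
      proof (rule integral_abs_bound_integral[OF i3])
        show "integrable mu01 (\<lambda>y. s * r powr (1 - p) * \<bar>f n y\<bar> powr p)" using If by simp
        fix y
        have "\<bar>A y * (g n y - B y)\<bar> = \<bar>A y\<bar> * \<bar>g n y - B y\<bar>" by (simp add: abs_mult)
        also have "\<dots> \<le> (\<bar>f n y\<bar> powr p * r powr (1 - p)) * s"
          by (intro mult_mono) (use trunc_tail[of p r "f n" y] trunc_low[of s "g n" y] p r s in \<open>auto simp: A_def B_def\<close>)
        finally show "\<bar>A y * (g n y - B y)\<bar> \<le> s * r powr (1 - p) * \<bar>f n y\<bar> powr p"
          by (simp add: mult_ac)
      qed
      also have "\<dots> = s * r powr (1 - p) * (\<integral>y. \<bar>f n y\<bar> powr p \<partial>mu01)" by simp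
      also have "\<dots> \<le> s * r powr (1 - p) * Cf powr p"
        by (intro mult_left_mono int_le_of_norm_le[OF p0 Cf]) (use s in auto)
      finally show ?thesis by (simp add: mult_ac)
    qed
    have "\<bar>x n\<bar> \<le> e r n * Cg + e r n * CG + s * Cf powr p * r powr (1 - p) + Cf * d s n"
      using xe t1 t2 t3 t4 by linarith
    then show ?thesis by (simp add: algebra_simps)
  qed
  have b1: "\<bar>X\<bar> \<le> (Cg + CG) * \<epsilon> r + s * Cf powr p * r powr (1 - p) + Cf * \<delta> s"
    if r: "r > 0" and s: "s > 0" for r s
  proof (rule tendsto_le[of U])
    show "\<not> trivial_limit U" using Ub by simp
    show "((\<lambda>n. \<bar>x n\<bar>) \<longlongrightarrow> \<bar>X\<bar>) U" by (intro tendsto_intros xt)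
    show "((\<lambda>n. (Cg + CG) * e r n + s * Cf powr p * r powr (1 - p) + Cf * d s n) \<longlongrightarrow>
      (Cg + CG) * \<epsilon> r + s * Cf powr p * r powr (1 - p) + Cf * \<delta> s) U"
      by (intro tendsto_intros et dt)
    show "\<forall>\<^sub>F n in U. \<bar>x n\<bar> \<le> (Cg + CG) * e r n + s * Cf powr p * r powr (1 - p) + Cf * d s n"
      using bound[OF r s] by simp
  qed
  have pw: "((\<lambda>r::real. r powr (1 - p)) \<longlongrightarrow> 0) at_top"
    by (rule tendsto_neg_powr) (use p in \<open>auto simp: filterlim_ident\<close>)
  have b2: "\<bar>X\<bar> \<le> Cf * \<delta> s" if s: "s > 0" for s
  proof (rule tendsto_le[of at_top])
    show "\<not> trivial_limit (at_top :: real filter)" by simp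
    show "((\<lambda>r. \<bar>X\<bar>) \<longlongrightarrow> \<bar>X\<bar>) at_top" by simp
    have "((\<lambda>r. (Cg + CG) * \<epsilon> r + s * Cf powr p * r powr (1 - p) + Cf * \<delta> s) \<longlongrightarrow>
       (Cg + CG) * 0 + s * Cf powr p * 0 + Cf * \<delta> s) at_top"
      by (intro tendsto_intros \<epsilon>0 pw)
    then show "((\<lambda>r. (Cg + CG) * \<epsilon> r + s * Cf powr p * r powr (1 - p) + Cf * \<delta> s) \<longlongrightarrow> Cf * \<delta> s) at_top"
      by simp
    show "\<forall>\<^sub>F r in at_top. \<bar>X\<bar> \<le> (Cg + CG) * \<epsilon> r + s * Cf powr p * r powr (1 - p) + Cf * \<delta> s"
      using eventually_gt_at_top[of 0] by eventually_elim (use b1 s in auto)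
  qed
  have "\<bar>X\<bar> \<le> 0"
  proof (rule tendsto_le[of at_top])
    show "\<not> trivial_limit (at_top :: real filter)" by simp
    show "((\<lambda>s. \<bar>X\<bar>) \<longlongrightarrow> \<bar>X\<bar>) at_top" by simp
    have "((\<lambda>s. Cf * \<delta> s) \<longlongrightarrow> Cf * 0) at_top" by (intro tendsto_intros \<delta>0)
    then show "((\<lambda>s. Cf * \<delta> s) \<longlongrightarrow> 0) at_top" by simp
    show "\<forall>\<^sub>F s in at_top. \<bar>X\<bar> \<le> Cf * \<delta> s"
      using eventually_gt_at_top[of 0] by eventually_elim (use b2 in auto)
  qed
  then have "X = 0" by simp
  then show ?thesis using xt unfolding x_def by simp
qed




theorem lemma2p4:
  fixes p q :: real and U :: "nat filter" and f g F G :: "nat \<Rightarrow> real \<Rightarrow> real"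
  assumes "1 < p" and "1/p + 1/q = 1"
    and "is_ultrafilter U" and "nonprincipal U"
    and "bounded_Lp_seq p f" and "bounded_Lp_seq q g"
    and "is_R U p f F" and "is_R U q g G"
  shows "ultra_pair U F g = ultra_pair U f G"
proof -
  note p = assms(1) and pq = assms(2) and U = assms(3) and bf = assms(5) and bg = assms(6)
    and RF = assms(7) and RG = assms(8)
  have q: "q > 1" using p pq q_gt1 by blast
  have qp: "1/q + 1/p = 1" using pq by simp
  have p0: "p > 0" and q0: "q > 0" using p q by auto
  have Ub: "U \<noteq> bot" using U by (simp add: is_ultrafilter_def)
  have f1: "\<And>n. in_Lp p (f n)" using bf by (auto simp: bounded_Lp_seq_def)
  have g1: "\<And>n. in_Lp q (g n)" using bg by (auto simp: bounded_Lp_seq_def)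
  obtain CF where F1: "\<And>n. in_Lp p (F n)" and CF: "\<And>n. Lp_norm p (F n) \<le> CF"
    using RF by (auto simp: bounded_Lp_seq_def is_R_def)
  obtain CG where G1: "\<And>n. in_Lp q (G n)" and CG: "\<And>n. Lp_norm q (G n) \<le> CG"
    using RG by (auto simp: bounded_Lp_seq_def is_R_def)
  have CF0: "CF \<ge> 0" using CF[of 0] Lp_norm_nonneg[of p "F 0"] by linarith
  note k1 = key[OF p pq U bf bg RF RG]
  note k2 = key[OF q qp U bg bf RG RF]
  define y where "y n = (\<integral>x. F n x * G n x \<partial>mu01)" for n
  have yt: "(y \<longlongrightarrow> Lim U y) U"
  proof (rule ulim[OF U])
    fix n
    show "\<bar>y n\<bar> \<le> CF * CG"
      unfolding y_def using holder(2)[OF p pq F1[of n] G1[of n]]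
        mult_mono[OF CF[of n] CG[of n] CF0 Lp_norm_nonneg]
      by linarith
  qed
  have e1: "(\<integral>x. F n x * g n x \<partial>mu01) = y n + (\<integral>x. F n x * (g n x - G n x) \<partial>mu01)" for n
  proof -
    have "(\<integral>x. F n x * g n x \<partial>mu01) = (\<integral>x. F n x * G n x + F n x * (g n x - G n x) \<partial>mu01)"
      by (rule Bochner_Integration.integral_cong) (auto simp: algebra_simps)
    also have "\<dots> = y n + (\<integral>x. F n x * (g n x - G n x) \<partial>mu01)"
      unfolding y_def
      by (rule Bochner_Integration.integral_add[OF holder(1)[OF p pq F1 G1]
          holder(1)[OF p pq F1 in_Lp_diff(1)[OF q0 g1 G1]]])
    finally show ?thesis .
  qed
  have e2: "(\<integral>x. f n x * G n x \<partial>mu01) = y n + (\<integral>x. G n x * (f n x - F n x) \<partial>mu01)" for n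
  proof -
    have "(\<integral>x. f n x * G n x \<partial>mu01) = (\<integral>x. F n x * G n x + G n x * (f n x - F n x) \<partial>mu01)"
      by (rule Bochner_Integration.integral_cong) (auto simp: algebra_simps)
    also have "\<dots> = y n + (\<integral>x. G n x * (f n x - F n x) \<partial>mu01)"
      unfolding y_def
      by (rule Bochner_Integration.integral_add[OF holder(1)[OF p pq F1 G1]
          holder(1)[OF q qp G1 in_Lp_diff(1)[OF p0 f1 F1]]])
    finally show ?thesis .
  qed
  have "((\<lambda>n. \<integral>x. F n x * g n x \<partial>mu01) \<longlongrightarrow> Lim U y + 0) U"
    unfolding e1 by (intro tendsto_add yt k1)
  then have l1: "ultra_pair U F g = Lim U y"
    unfolding ultra_pair_def by (intro tendsto_Lim) (use Ub in auto)
  have "((\<lambda>n. \<integral>x. f n x * G n x \<partial>mu01) \<longlongrightarrow> Lim U y + 0) U"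
    unfolding e2 by (intro tendsto_add yt k2)
  then have l2: "ultra_pair U f G = Lim U y"
    unfolding ultra_pair_def by (intro tendsto_Lim) (use Ub in auto)
  show ?thesis using l1 l2 by simp
qed

end
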